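(* Let $K\ge1$ be fixed, $\boldsymbol{\beta}_0\in\mathbb{R}^K$, and for each $n>K$ let the $n\times K$ design matrix $\mathbf{X}$ with rows $\mathbf{x}_i$ satisfy $\mathbf{X}^t\mathbf{X}=n\mathbf{I}$, $\sum_{i=1}^n x_{i,k}=0$ for each $k$, and $\max_{1\le i\le n}\|\mathbf{x}_i\|/\sqrt n\to0$. Suppose $Y_i=\mathbf{x}_i^t\boldsymbol{\beta}_0+\varepsilon_i$ with $\varepsilon_i$ independent, $\mathbb{E}(\varepsilon_i)=0$, $\mathbb{E}(\varepsilon_i^2)=\sigma_0^2>0$, $\mathbb{E}(\varepsilon_i^4)\le M<\infty$. Consider the rescaled spike and slab model with $\lambda_n=n$, and priors $\pi,\mu$ such that $\pi\{\gamma_k\ge\eta_0\}=1$ for some $\eta_0>0$ and every $k$, and $\mu\{\sigma^2\le s_0^2\}=1$ for some $0<s_0^2<\infty$. Let $C_n\to\infty$ be any positive increasing sequence with $C_n/\sqrt n\to0$ and let $\widehat{\mathcal{M}}_n=\mathcal{M}_n(C_n)$. Then $\widehat{\mathcal{M}}_n\to\mathcal{M}_0$ in probability.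
   Context: $\mathbf{Y}=(Y_1,\dots,Y_n)^t$, OLS $\widehat{\boldsymbol{\beta}}_n^\circ=(\mathbf{X}^t\mathbf{X})^{-1}\mathbf{X}^t\mathbf{Y}$, $\widehat\sigma_n^2=\|\mathbf{Y}-\mathbf{X}\widehat{\boldsymbol{\beta}}_n^\circ\|^2/(n-K)$. Rescaled spike and slab model: $Y_i^*=\widehat\sigma_n^{-1}n^{1/2}Y_i$, and as data $\mathbf{Y}^*$ is modeled by $(Y_i^*\mid\boldsymbol{\beta},\sigma^2)$ independent $N(\mathbf{x}_i^t\boldsymbol{\beta},\sigma^2\lambda_n)$, $(\boldsymbol{\beta}\mid\boldsymbol{\gamma})\sim N(\mathbf{0},\mathrm{diag}(\gamma_1,\dots,\gamma_K))$, $\boldsymbol{\gamma}\sim\pi$, $\sigma^2\sim\mu$, with $\pi\{\gamma_k>0\}=1$, $\mu\{\sigma^2>0\}=1$. $\widehat{\boldsymbol{\beta}}_n^*=(\widehat\beta_{1,n}^*,\dots,\widehat\beta_{K,n}^* )^t$ is the posterior mean of $\boldsymbol{\beta}$ given $\mathbf{Y}^*$. $\mathcal{M}_0=(\mathbb{I}\{\beta_{1,0}\ne0\},\dots,\mathbb{I}\{\beta_{K,0}\ne0\})^t$ and, for $C>0$, $\mathcal{M}_n(C)=(\mathbb{I}\{|\widehat\beta_{1,n}^*|\ge C\},\dots,\mathbb{I}\{|\widehat\beta_{K,n}^*|\ge C\})^t$. *)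

theory Defs
  imports "HOL-Probability.Probability"
begin

text \<open>Design: for sample size n, the rows are x n 0, ..., x n (n-1), each in real^'k
  (K = CARD('k)). Data vectors y are functions nat => real, used on indices below n.\<close>

definition gram :: "(nat \<Rightarrow> real^'k) \<Rightarrow> nat \<Rightarrow> real^'k^'k" where
  "gram x n = (\<chi> j l. \<Sum>i<n. x i $ j * x i $ l)"

definition ols :: "(nat \<Rightarrow> real^'k) \<Rightarrow> nat \<Rightarrow> (nat \<Rightarrow> real) \<Rightarrow> real^'k" where
  "ols x n y = matrix_inv (gram x n) *v (\<chi> j. \<Sum>i<n. x i $ j * y i)"

definition sigma_hat_sq :: "(nat \<Rightarrow> real^'k) \<Rightarrow> nat \<Rightarrow> (nat \<Rightarrow> real) \<Rightarrow> real" where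
  "sigma_hat_sq x n y = (\<Sum>i<n. (y i - x i \<bullet> ols x n y)\<^sup>2) / (real n - real CARD('k))"

definition rescaled :: "(nat \<Rightarrow> real^'k) \<Rightarrow> nat \<Rightarrow> (nat \<Rightarrow> real) \<Rightarrow> nat \<Rightarrow> real" where
  "rescaled x n y i = sqrt (real n) / sqrt (sigma_hat_sq x n y) * y i"

definition ss_lik :: "(nat \<Rightarrow> real^'k) \<Rightarrow> nat \<Rightarrow> real \<Rightarrow> (nat \<Rightarrow> real) \<Rightarrow> real^'k \<Rightarrow> real \<Rightarrow> real" where
  "ss_lik x n lam y b s = (\<Prod>i<n. normal_density (x i \<bullet> b) (sqrt (s * lam)) (y i))"

definition slab_dens :: "real^'k \<Rightarrow> real^'k \<Rightarrow> real" where
  "slab_dens g b = (\<Prod>k\<in>UNIV. normal_density 0 (sqrt (g $ k)) (b $ k))"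

text \<open>Posterior mean of beta given data y, in the model
  (y_i | beta, sigma^2) ~ N(x_i^t beta, sigma^2 lam) independent,
  (beta | gamma) ~ N(0, diag gamma), gamma ~ pi, sigma^2 ~ mu (independent priors),
  computed by Bayes' formula.\<close>
definition post_mean ::
  "(real^'k) measure \<Rightarrow> real measure \<Rightarrow> real \<Rightarrow> (nat \<Rightarrow> real^'k) \<Rightarrow> nat \<Rightarrow> (nat \<Rightarrow> real) \<Rightarrow> real^'k"
  where
  "post_mean pr mu lam x n y =
     (\<chi> k. (\<integral>gs. (\<integral>b. b $ k * ss_lik x n lam y b (snd gs) * slab_dens (fst gs) b \<partial>lborel) \<partial>(pr \<Otimes>\<^sub>M mu))
          / (\<integral>gs. (\<integral>b. ss_lik x n lam y b (snd gs) * slab_dens (fst gs) b \<partial>lborel) \<partial>(pr \<Otimes>\<^sub>M mu)))"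

definition model_hat :: "real^'k \<Rightarrow> real \<Rightarrow> 'k \<Rightarrow> bool" where
  "model_hat bhat C = (\<lambda>k. \<bar>bhat $ k\<bar> \<ge> C)"

definition model_true :: "real^'k \<Rightarrow> 'k \<Rightarrow> bool" where
  "model_true b0 = (\<lambda>k. b0 $ k \<noteq> 0)"

end

theory Submission
  imports Defs
begin

definition Xty :: "(nat \<Rightarrow> real^'k) \<Rightarrow> nat \<Rightarrow> (nat \<Rightarrow> real) \<Rightarrow> real^'k" where
  "Xty X n y = (\<chi> j. \<Sum>i<n. X i $ j * y i)"

lemma inner_real_vec: "(a::real^'k) \<bullet> b = (\<Sum>j\<in>UNIV. a$j * b$j)"
  by (simp add: inner_vec_def)

lemma gram_entry:
  assumes "gram X n = real n *\<^sub>R mat 1"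
  shows "(\<Sum>i<n. X i $ j * X i $ l) = (if j = l then real n else 0)"
proof -
  have "gram X n $ j $ l = (real n *\<^sub>R mat 1) $ j $ l" using assms by simp
  then show ?thesis by (simp add: gram_def mat_def)
qed

lemma sumsq_inner:
  assumes "gram X n = real n *\<^sub>R mat 1"
  shows "(\<Sum>i<n. (X i \<bullet> v)\<^sup>2) = real n * (v \<bullet> v)"
proof -
  have e: "(X i \<bullet> v)\<^sup>2 = (\<Sum>j\<in>UNIV. \<Sum>l\<in>UNIV. v$j * v$l * (X i $ j * X i $ l))" for i
    unfolding inner_real_vec power2_eq_square sum_product by (simp add: mult_ac)
  have "(\<Sum>i<n. (X i \<bullet> v)\<^sup>2) = (\<Sum>i<n. \<Sum>j\<in>UNIV. \<Sum>l\<in>UNIV. v$j * v$l * (X i $ j * X i $ l))"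
    by (simp only: e)
  also have "\<dots> = (\<Sum>j\<in>UNIV. \<Sum>i<n. \<Sum>l\<in>UNIV. v$j * v$l * (X i $ j * X i $ l))"
    by (rule sum.swap)
  also have "\<dots> = (\<Sum>j\<in>UNIV. \<Sum>l\<in>UNIV. \<Sum>i<n. v$j * v$l * (X i $ j * X i $ l))"
    by (rule sum.cong[OF refl], rule sum.swap)
  also have "\<dots> = (\<Sum>j\<in>UNIV. \<Sum>l\<in>UNIV. v$j * v$l * (\<Sum>i<n. X i $ j * X i $ l))"
    by (simp only: sum_distrib_left)
  also have "\<dots> = (\<Sum>j\<in>UNIV. \<Sum>l\<in>UNIV. (if j = l then real n * (v$j * v$l) else 0))"
    by (rule sum.cong[OF refl], rule sum.cong[OF refl]) (simp add: gram_entry[OF assms])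
  also have "\<dots> = real n * (v \<bullet> v)"
    by (simp add: inner_real_vec sum_distrib_left)
  finally show ?thesis .
qed

lemma cross_inner: "(\<Sum>i<n. y i * (X i \<bullet> v)) = Xty X n y \<bullet> v"
proof -
  have "(\<Sum>i<n. y i * (X i \<bullet> v)) = (\<Sum>i<n. \<Sum>j\<in>UNIV. X i $ j * y i * v $ j)"
    by (simp add: inner_real_vec sum_distrib_left mult_ac)
  also have "\<dots> = (\<Sum>j\<in>UNIV. \<Sum>i<n. X i $ j * y i * v $ j)" by (rule sum.swap)
  also have "\<dots> = Xty X n y \<bullet> v" by (simp add: Xty_def inner_real_vec sum_distrib_right)
  finally show ?thesis .
qed

lemma matrix_inv_scaled:
  assumes "c \<noteq> (0::real)"
  shows "matrix_inv (c *\<^sub>R (mat 1 :: real^'k^'k)) = (1/c) *\<^sub>R mat 1"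
proof -
  let ?A = "c *\<^sub>R (mat 1 :: real^'k^'k)"
  have ex: "\<exists>A'::real^'k^'k. ?A ** A' = mat 1 \<and> A' ** ?A = mat 1"
    by (rule exI[of _ "(1/c) *\<^sub>R mat 1"]) (simp add: assms matrix_scalar_ac)
  then have h: "?A ** matrix_inv ?A = mat 1 \<and> matrix_inv ?A ** ?A = mat 1"
    unfolding matrix_inv_def by (rule someI_ex)
  have "matrix_inv ?A = ((1/c) *\<^sub>R mat 1 ** ?A) ** matrix_inv ?A"
    using assms by (simp add: matrix_scalar_ac)
  also have "\<dots> = (1/c) *\<^sub>R mat 1 ** (?A ** matrix_inv ?A)"
    by (simp add: matrix_mul_assoc)
  also have "\<dots> = (1/c) *\<^sub>R mat 1" using h by simp
  finally show ?thesis .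
qed

lemma scaled_id_mult: "((a::real) *\<^sub>R (mat 1 :: real^'k^'k)) *v v = a *\<^sub>R v"
proof -
  have "((a *\<^sub>R (mat 1 :: real^'k^'k)) *v v)$i = (\<Sum>j\<in>UNIV. (if i = j then a * v$j else 0))" for i
    unfolding matrix_vector_mult_def mat_def by (simp only: vec_lambda_beta vector_scaleR_component, rule sum.cong, auto)
  then show ?thesis by (simp add: vec_eq_iff)
qed

lemma ols_eq:
  assumes "gram X n = real n *\<^sub>R mat 1" "n > 0"
  shows "ols X n y = (1 / real n) *\<^sub>R Xty X n y"
  unfolding ols_def assms(1) using assms(2)
  by (simp add: matrix_inv_scaled Xty_def[symmetric] scaled_id_mult)

lemma resid_expand:
  assumes "gram X n = real n *\<^sub>R mat 1"
  shows "(\<Sum>i<n. (y i - X i \<bullet> b)\<^sup>2) = (\<Sum>i<n. (y i)\<^sup>2) - 2 * (Xty X n y \<bullet> b) + real n * (b \<bullet> b)"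
proof -
  have "(\<Sum>i<n. (y i - X i \<bullet> b)\<^sup>2) = (\<Sum>i<n. (y i)\<^sup>2) - 2 * (\<Sum>i<n. y i * (X i \<bullet> b)) + (\<Sum>i<n. (X i \<bullet> b)\<^sup>2)"
    by (simp add: power2_diff sum.distrib sum_subtractf sum_distrib_left algebra_simps)
  then show ?thesis by (simp add: cross_inner sumsq_inner[OF assms])
qed

lemma borel_measurable_vec_nth[measurable (raw)]:
  "f \<in> borel_measurable M \<Longrightarrow> (\<lambda>x. (f x :: real^'k) $ j) \<in> borel_measurable M"
  by (rule borel_measurable_continuous_on[where f="\<lambda>b. b $ j"])
     (auto intro: continuous_on_component continuous_on_id)

lemma Basis_vec_range: "(Basis :: (real^'k) set) = range (\<lambda>i. axis i 1)"
  by (auto simp: Basis_vec_def)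

lemma inj_axis1: "inj (\<lambda>i::'k::finite. axis i (1::real))"
  by (auto simp: inj_def axis_eq_axis)

lemma vec_nth_sum_basis:
  "(\<Sum>e\<in>(Basis :: (real^'k) set). F e *\<^sub>R e) $ j = F (axis j 1)"
proof -
  have "(\<Sum>e\<in>(Basis :: (real^'k) set). F e *\<^sub>R e) = (\<Sum>i\<in>UNIV. F (axis i 1) *\<^sub>R (axis i 1 :: real^'k))"
    unfolding Basis_vec_range by (subst sum.reindex[OF inj_axis1]) simp
  also have "\<dots> $ j = (\<Sum>i\<in>UNIV. if i = j then F (axis j 1) else 0)"
    unfolding sum_component by (rule sum.cong) (auto simp: axis_def)
  finally show ?thesis by simp
qed

lemma prod_basis_reindex:
  "(\<Prod>e\<in>(Basis :: (real^'k) set). h e) = (\<Prod>i\<in>UNIV. h (axis i 1))"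
  unfolding Basis_vec_range by (subst prod.reindex[OF inj_axis1]) simp

lemma vec_integral_prod:
  fixes f :: "'k::finite \<Rightarrow> real \<Rightarrow> real"
  assumes int: "\<And>j. integrable lborel (f j)"
  shows "integrable lborel (\<lambda>b::real^'k. \<Prod>j\<in>UNIV. f j (b$j))"
    and "(\<integral>b. (\<Prod>j\<in>UNIV. f j ((b::real^'k)$j)) \<partial>lborel) = (\<Prod>j\<in>UNIV. \<integral>t. f j t \<partial>lborel)"
proof -
  interpret product_sigma_finite "\<lambda>_. lborel" by standard
  define T where "T = (\<lambda>F. \<Sum>e\<in>(Basis :: (real^'k) set). F e *\<^sub>R e)"
  define f' where "f' = (\<lambda>e::real^'k. f (SOME j. axis j 1 = e))"
  have f'ax: "f' (axis j 1) = f j" for j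
    unfolding f'_def by (rule arg_cong[where f=f], rule some_equality) (auto simp: axis_eq_axis)
  have Tm: "T \<in> measurable (\<Pi>\<^sub>M b\<in>Basis. lborel) borel"
    unfolding T_def by measurable
  have fm: "f j \<in> borel_measurable borel" for j
    using borel_measurable_integrable[OF int[of j]] by simp
  have hm: "(\<lambda>b::real^'k. \<Prod>j\<in>UNIV. f j (b$j)) \<in> borel_measurable borel"
    using fm by measurable
  have eq: "(\<Prod>j\<in>UNIV. f j (T F $ j)) = (\<Prod>e\<in>Basis. f' e (F e))" for F
    unfolding T_def vec_nth_sum_basis prod_basis_reindex f'ax ..
  have int': "e \<in> Basis \<Longrightarrow> integrable lborel (f' e)" for e
    unfolding f'_def using int by simp
  have "integrable (\<Pi>\<^sub>M b\<in>Basis. lborel) (\<lambda>F. \<Prod>e\<in>Basis. f' e (F e))"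
    by (rule product_integrable_prod) (auto intro: int')
  then show "integrable lborel (\<lambda>b::real^'k. \<Prod>j\<in>UNIV. f j (b$j))"
    unfolding lborel_eq[where 'a="real^'k"] T_def[symmetric]
    by (subst integrable_distr_eq[OF Tm hm]) (simp add: eq)
  have "(\<integral>b. (\<Prod>j\<in>UNIV. f j ((b::real^'k)$j)) \<partial>lborel)
      = (\<integral>F. (\<Prod>e\<in>Basis. f' e (F e)) \<partial>(\<Pi>\<^sub>M b\<in>Basis. lborel))"
    unfolding lborel_eq[where 'a="real^'k"] T_def[symmetric]
    by (subst integral_distr[OF Tm hm]) (simp add: eq)
  also have "\<dots> = (\<Prod>e\<in>Basis. \<integral>t. f' e t \<partial>lborel)"
    by (rule product_integral_prod) (auto intro: int')
  also have "\<dots> = (\<Prod>j\<in>UNIV. \<integral>t. f j t \<partial>lborel)"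
    unfolding prod_basis_reindex f'ax ..
  finally show "(\<integral>b. (\<Prod>j\<in>UNIV. f j ((b::real^'k)$j)) \<partial>lborel) = (\<Prod>j\<in>UNIV. \<integral>t. f j t \<partial>lborel)" .
qed

lemma gauss_1d:
  assumes s: "s > 0" and g: "g > 0"
  shows "exp (-(t-m)\<^sup>2/(2* s)) * normal_density 0 (sqrt g) t
       = (sqrt (s/(s+g)) * exp (-(m\<^sup>2)/(2*(s+g)))) * normal_density (g/(g+s)*m) (sqrt (s * g/(s+g))) t"
proof -
  have tau: "s*g/(s+g) > 0" using s g by simp
  have e: "-(t-m)\<^sup>2/(2* s) + -(t-0)\<^sup>2/(2*g) = -(m\<^sup>2)/(2*(s+g)) + -(t - g/(g+s)*m)\<^sup>2/(2*(s * g/(s+g)))"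
  proof -
    have "s + g \<noteq> 0" "g + s \<noteq> 0" "s \<noteq> 0" "g \<noteq> 0" using s g by auto
    note nz = this
    have aux: "\<And>d X. d \<noteq> 0 \<Longrightarrow> (X/d)\<^sup>2/(2*(s * g/d)) = X\<^sup>2/(2*d * s * g)"
      using nz by (simp add: field_simps power2_eq_square)
    have a: "(t - g/(g+s)*m)\<^sup>2/(2*(s * g/(s+g))) = ((g+s)*t - g*m)\<^sup>2/(2*(g+s) * s * g)"
    proof -
      have "t - g/(g+s)*m = ((g+s)*t - g*m)/(g+s)" using nz by (simp add: field_simps)
      then show ?thesis using aux[of "g+s"] nz by (simp add: add.commute)
    qed
    have l: "\<And>d. d \<noteq> 0 \<Longrightarrow> -(t-m)\<^sup>2/(2 * s) + -(t-0)\<^sup>2/(2*g) = -((t-m)\<^sup>2 * d * g + t\<^sup>2 * d * s)/(2*d * s * g)"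
      using nz by (simp add: field_simps)
    have r: "\<And>d. d \<noteq> 0 \<Longrightarrow> -(m\<^sup>2)/(2*d) + -((d*t - g*m)\<^sup>2/(2*d * s * g)) = -(m\<^sup>2 * s * g + (d*t - g*m)\<^sup>2)/(2*d * s * g)"
      using nz by (simp add: field_simps)
    have p: "(t-m)\<^sup>2 * (g+s) * g + t\<^sup>2 * (g+s) * s = m\<^sup>2 * s * g + ((g+s)*t - g*m)\<^sup>2"
      by (simp add: power2_eq_square algebra_simps)
    have b0: "-(t-m)\<^sup>2/(2 * s) + -(t-0)\<^sup>2/(2*g) = -(m\<^sup>2)/(2*(g+s)) + -(((g+s)*t - g*m)\<^sup>2/(2*(g+s) * s * g))"
      unfolding l[OF nz(2)] r[OF nz(2)] p ..
    have b: "-(t-m)\<^sup>2/(2 * s) + -(t-0)\<^sup>2/(2*g) = -(m\<^sup>2)/(2*(s+g)) + -(((g+s)*t - g*m)\<^sup>2/(2*(g+s) * s * g))"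
      using b0 by (simp add: add.commute)
    show ?thesis using b unfolding minus_divide_left[symmetric] a .
  qed
  have r: "sqrt (s/(s+g)) * (1/sqrt(2*pi*(s * g/(s+g)))) = 1/sqrt(2*pi*g)"
  proof -
    have "sqrt (s/(s+g)) * (1/sqrt(2*pi*(s * g/(s+g)))) = sqrt ((s/(s+g)) / (2*pi*(s * g/(s+g))))"
      by (simp add: real_sqrt_divide)
    also have "(s/(s+g)) / (2*pi*(s * g/(s+g))) = 1/(2*pi*g)"
    proof -
      have "\<And>d. d \<noteq> 0 \<Longrightarrow> (s/d) / (2*pi*(s * g/d)) = 1/(2*pi*g)"
        using s g by (simp add: field_simps)
      then show ?thesis using s g by simp
    qed
    finally show ?thesis by (simp add: real_sqrt_divide)
  qed
  have "exp (-(t-m)\<^sup>2/(2* s)) * normal_density 0 (sqrt g) t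
      = (1/sqrt(2*pi*g)) * exp (-(t-m)\<^sup>2/(2* s) + -(t-0)\<^sup>2/(2*g))"
    using g by (simp add: normal_density_def exp_add[symmetric] exp_diff)
  also have "\<dots> = (sqrt (s/(s+g)) * (1/sqrt(2*pi*(s * g/(s+g))))) * (exp (-(m\<^sup>2)/(2*(s+g))) * exp (-(t - g/(g+s)*m)\<^sup>2/(2*(s * g/(s+g)))))"
    unfolding e r exp_add by (rule refl)
  also have "\<dots> = (sqrt (s/(s+g)) * exp (-(m\<^sup>2)/(2*(s+g)))) * normal_density (g/(g+s)*m) (sqrt (s * g/(s+g))) t"
    using tau by (simp add: normal_density_def)
  finally show ?thesis .
qed

definition mvec :: "(nat \<Rightarrow> real^'k) \<Rightarrow> nat \<Rightarrow> (nat \<Rightarrow> real) \<Rightarrow> real^'k" where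
  "mvec X n z = (1 / real n) *\<^sub>R Xty X n z"

definition Rz :: "(nat \<Rightarrow> real^'k) \<Rightarrow> nat \<Rightarrow> (nat \<Rightarrow> real) \<Rightarrow> real" where
  "Rz X n z = (\<Sum>i<n. (z i)\<^sup>2) - real n * (mvec X n z \<bullet> mvec X n z)"

definition Qf :: "nat \<Rightarrow> real \<Rightarrow> real \<Rightarrow> real" where
  "Qf n R s = (1 / sqrt (2 * pi * (s * real n))) ^ n * exp (- R / (2 * (s * real n)))"

definition cc :: "real \<Rightarrow> real \<Rightarrow> real \<Rightarrow> real" where
  "cc s g m = sqrt (s / (s + g)) * exp (- (m\<^sup>2) / (2 * (s + g)))"

definition mu' :: "real \<Rightarrow> real \<Rightarrow> real \<Rightarrow> real" where
  "mu' s g m = g / (g + s) * m"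

definition sd :: "real \<Rightarrow> real \<Rightarrow> real" where
  "sd s g = sqrt (s * g / (s + g))"

lemma ss_lik_closed:
  assumes "s > 0" "n > 0"
  shows "ss_lik X n (real n) z b s
    = (1 / sqrt (2 * pi * (s * real n))) ^ n * exp (- (\<Sum>i<n. (z i - X i \<bullet> b)\<^sup>2) / (2 * (s * real n)))"
proof -
  have sq: "(sqrt (s * real n))\<^sup>2 = s * real n" using assms by simp
  have "ss_lik X n (real n) z b s = (\<Prod>i<n. (1 / sqrt (2 * pi * (s * real n))) * exp (- (z i - X i \<bullet> b)\<^sup>2 / (2 * (s * real n))))"
    unfolding ss_lik_def normal_density_def sq ..
  also have "\<dots> = (1 / sqrt (2 * pi * (s * real n))) ^ n * (\<Prod>i<n. exp (- (z i - X i \<bullet> b)\<^sup>2 / (2 * (s * real n))))"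
    by (subst prod.distrib) simp
  also have "(\<Prod>i<n. exp (- (z i - X i \<bullet> b)\<^sup>2 / (2 * (s * real n)))) = exp (\<Sum>i<n. - (z i - X i \<bullet> b)\<^sup>2 / (2 * (s * real n)))"
    by (simp add: exp_sum)
  also have "(\<Sum>i<n. - (z i - X i \<bullet> b)\<^sup>2 / (2 * (s * real n))) = - (\<Sum>i<n. (z i - X i \<bullet> b)\<^sup>2) / (2 * (s * real n))"
    by (simp add: sum_divide_distrib sum_negf)
  finally show ?thesis .
qed

lemma resid_decomp:
  assumes "gram X n = real n *\<^sub>R mat 1" "n > 0"
  shows "(\<Sum>i<n. (z i - X i \<bullet> b)\<^sup>2) = Rz X n z + real n * (\<Sum>j\<in>UNIV. (b$j - mvec X n z $ j)\<^sup>2)"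
proof -
  let ?m = "mvec X n z"
  have xt: "Xty X n z = real n *\<^sub>R ?m" using assms(2) by (simp add: mvec_def)
  have d: "(\<Sum>j\<in>UNIV. (b$j - ?m $ j)\<^sup>2) = (b - ?m) \<bullet> (b - ?m)"
    by (simp add: inner_real_vec power2_eq_square)
  have "(\<Sum>i<n. (z i - X i \<bullet> b)\<^sup>2) = (\<Sum>i<n. (z i)\<^sup>2) - 2 * (Xty X n z \<bullet> b) + real n * (b \<bullet> b)"
    by (rule resid_expand[OF assms(1)])
  also have "\<dots> = Rz X n z + real n * ((b - ?m) \<bullet> (b - ?m))"
    unfolding xt Rz_def by (simp add: inner_diff_left inner_diff_right inner_commute algebra_simps)
  finally show ?thesis unfolding d .
qed

lemma lik_factor:
  assumes hg: "gram X n = real n *\<^sub>R mat 1" and n: "n > 0" and s: "s > 0" and g: "\<And>j. g$j > 0"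
  shows "ss_lik X n (real n) z b s * slab_dens g b
    = Qf n (Rz X n z) s * (\<Prod>j\<in>UNIV. cc s (g$j) (mvec X n z $ j) *
          normal_density (mu' s (g$j) (mvec X n z $ j)) (sd s (g$j)) (b$j))"
proof -
  let ?m = "mvec X n z"
  let ?c = "(1 / sqrt (2 * pi * (s * real n))) ^ n"
  have sn: "s * real n > 0" using s n by simp
  have "exp (- (\<Sum>i<n. (z i - X i \<bullet> b)\<^sup>2) / (2 * (s * real n)))
      = exp (- Rz X n z / (2 * (s * real n)) + (\<Sum>j\<in>UNIV. - (b$j - ?m $ j)\<^sup>2 / (2 * s)))"
  proof -
    have "- (\<Sum>i<n. (z i - X i \<bullet> b)\<^sup>2) / (2 * (s * real n))
        = - Rz X n z / (2 * (s * real n)) + (\<Sum>j\<in>UNIV. - (b$j - ?m $ j)\<^sup>2 / (2 * s))"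
    proof -
      have "s \<noteq> 0" "real n \<noteq> 0" using s n by auto
      then show ?thesis unfolding resid_decomp[OF hg n]
        by (simp add: field_simps sum_divide_distrib[symmetric] sum_negf)
    qed
    then show ?thesis by simp
  qed
  also have "\<dots> = exp (- Rz X n z / (2 * (s * real n))) * (\<Prod>j\<in>UNIV. exp (- (b$j - ?m $ j)\<^sup>2 / (2 * s)))"
    by (simp only: exp_add exp_sum[OF finite_class.finite_UNIV])
  finally have e: "exp (- (\<Sum>i<n. (z i - X i \<bullet> b)\<^sup>2) / (2 * (s * real n))) =
      exp (- Rz X n z / (2 * (s * real n))) * (\<Prod>j\<in>UNIV. exp (- (b$j - ?m $ j)\<^sup>2 / (2 * s)))" .
  have "ss_lik X n (real n) z b s * slab_dens g b
     = Qf n (Rz X n z) s * ((\<Prod>j\<in>UNIV. exp (- (b$j - ?m $ j)\<^sup>2 / (2 * s))) * (\<Prod>j\<in>UNIV. normal_density 0 (sqrt (g$j)) (b$j)))"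
    unfolding ss_lik_closed[OF s n] e slab_dens_def Qf_def by (simp add: mult_ac)
  also have "\<dots> = Qf n (Rz X n z) s * (\<Prod>j\<in>UNIV. exp (- (b$j - ?m $ j)\<^sup>2 / (2 * s)) * normal_density 0 (sqrt (g$j)) (b$j))"
    by (simp add: prod.distrib)
  also have "\<dots> = Qf n (Rz X n z) s * (\<Prod>j\<in>UNIV. cc s (g$j) (?m $ j) *
          normal_density (mu' s (g$j) (?m $ j)) (sd s (g$j)) (b$j))"
    unfolding cc_def mu'_def sd_def
    by (rule arg_cong[where f="(*) _"], rule prod.cong[OF refl], rule gauss_1d[OF s g])
  finally show ?thesis .
qed

lemma sd_pos: "s > 0 \<Longrightarrow> g > 0 \<Longrightarrow> sd s g > 0"
  unfolding sd_def by simp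

lemma cc_pos: "s > 0 \<Longrightarrow> g > 0 \<Longrightarrow> cc s g m > 0"
  unfolding cc_def by simp

lemma D_integral:
  assumes hg: "gram X n = real n *\<^sub>R mat 1" and n: "n > 0" and s: "s > 0" and g: "\<And>j. g$j > 0"
  shows "(\<integral>b. ss_lik X n (real n) z b s * slab_dens g b \<partial>lborel)
       = Qf n (Rz X n z) s * (\<Prod>j\<in>UNIV. cc s (g$j) (mvec X n z $ j))"
proof -
  let ?f = "\<lambda>j t. cc s (g$j) (mvec X n z $ j) * normal_density (mu' s (g$j) (mvec X n z $ j)) (sd s (g$j)) t"
  have int: "integrable lborel (?f j)" for j using sd_pos[OF s g] by simp
  have i1: "(\<integral>t. ?f j t \<partial>lborel) = cc s (g$j) (mvec X n z $ j)" for j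
    using sd_pos[OF s g] by simp
  have "(\<integral>b. ss_lik X n (real n) z b s * slab_dens g b \<partial>lborel)
      = (\<integral>b. Qf n (Rz X n z) s * (\<Prod>j\<in>UNIV. ?f j (b$j)) \<partial>lborel)"
    unfolding lik_factor[OF hg n s g] ..
  also have "\<dots> = Qf n (Rz X n z) s * (\<Prod>j\<in>UNIV. \<integral>t. ?f j t \<partial>lborel)"
    by (simp only: integral_mult_right_zero vec_integral_prod(2)[OF int])
  finally show ?thesis unfolding i1 .
qed

lemma N_integral:
  assumes hg: "gram X n = real n *\<^sub>R mat 1" and n: "n > 0" and s: "s > 0" and g: "\<And>j. g$j > 0"
  shows "(\<integral>b. b $ k * ss_lik X n (real n) z b s * slab_dens g b \<partial>lborel)
       = mu' s (g$k) (mvec X n z $ k) * (Qf n (Rz X n z) s * (\<Prod>j\<in>UNIV. cc s (g$j) (mvec X n z $ j)))"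
proof -
  let ?f = "\<lambda>j t. cc s (g$j) (mvec X n z $ j) * normal_density (mu' s (g$j) (mvec X n z $ j)) (sd s (g$j)) t"
  let ?h = "\<lambda>j t. (if j = k then t else 1) * ?f j t"
  have int: "integrable lborel (?h j)" for j
  proof (cases "j = k")
    case True
    have "integrable lborel (\<lambda>t. cc s (g$j) (mvec X n z $ j) * (normal_density (mu' s (g$j) (mvec X n z $ j)) (sd s (g$j)) t * t))"
      using integrable_normal_moment_nz_1[OF sd_pos[OF s g]] by simp
    then show ?thesis using True by (simp add: mult_ac)
  qed (use sd_pos[OF s g] in simp)
  have i1: "(\<integral>t. ?h j t \<partial>lborel) = cc s (g$j) (mvec X n z $ j) * (if j = k then mu' s (g$j) (mvec X n z $ j) else 1)" for j
  proof (cases "j = k")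
    case True
    have "(\<integral>t. ?h j t \<partial>lborel) = (\<integral>t. cc s (g$j) (mvec X n z $ j) * (normal_density (mu' s (g$j) (mvec X n z $ j)) (sd s (g$j)) t * t) \<partial>lborel)"
      using True by (simp add: mult_ac)
    also have "\<dots> = cc s (g$j) (mvec X n z $ j) * mu' s (g$j) (mvec X n z $ j)"
      by (simp only: integral_mult_right_zero integral_normal_moment_nz_1[OF sd_pos[OF s g]])
    finally show ?thesis using True by simp
  next
    case False
    then show ?thesis using sd_pos[OF s g] by simp
  qed
  have pe: "b $ k * (\<Prod>j\<in>UNIV. ?f j (b$j)) = (\<Prod>j\<in>UNIV. ?h j (b$j))" for b
    by (simp add: prod.distrib prod.delta)
  have "(\<integral>b. b $ k * ss_lik X n (real n) z b s * slab_dens g b \<partial>lborel)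
      = (\<integral>b. Qf n (Rz X n z) s * (\<Prod>j\<in>UNIV. ?h j (b$j)) \<partial>lborel)"
    unfolding mult.assoc lik_factor[OF hg n s g] pe[symmetric] by (simp add: mult_ac)
  also have "\<dots> = Qf n (Rz X n z) s * (\<Prod>j\<in>UNIV. \<integral>t. ?h j t \<partial>lborel)"
    by (simp only: integral_mult_right_zero vec_integral_prod(2)[OF int])
  also have "\<dots> = Qf n (Rz X n z) s * ((\<Prod>j\<in>UNIV. cc s (g$j) (mvec X n z $ j)) * mu' s (g$k) (mvec X n z $ k))"
    unfolding i1 prod.distrib by (simp add: prod.delta)
  finally show ?thesis by (simp add: mult_ac)
qed

lemma integrand_meas:
  fixes z :: "'a \<Rightarrow> nat \<Rightarrow> real"
  assumes [measurable]: "\<And>i. (\<lambda>\<omega>. z \<omega> i) \<in> borel_measurable N"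
  shows "(\<lambda>p. ss_lik X n lam (z (fst (fst p))) (snd p) (snd (snd (fst p))) * slab_dens (fst (snd (fst p))) (snd p :: real^'k))
          \<in> borel_measurable ((N \<Otimes>\<^sub>M (borel \<Otimes>\<^sub>M borel)) \<Otimes>\<^sub>M borel)"
  unfolding ss_lik_def slab_dens_def normal_density_def by measurable

lemma sets_pm: "sets pr = sets borel \<Longrightarrow> sets mu = sets borel \<Longrightarrow> sets (pr \<Otimes>\<^sub>M mu) = sets (borel \<Otimes>\<^sub>M borel)"
  by (rule sets_pair_measure_cong)

lemma post_mean_meas:
  fixes z :: "'a \<Rightarrow> nat \<Rightarrow> real" and pr :: "(real^'k) measure" and mu :: "real measure"
  assumes zm: "\<And>i. (\<lambda>\<omega>. z \<omega> i) \<in> borel_measurable N"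
    and prs: "sets pr = sets borel" and mus: "sets mu = sets borel"
    and prp: "prob_space pr" and mup: "prob_space mu"
  shows "(\<lambda>\<omega>. post_mean pr mu lam X n (z \<omega>) $ k) \<in> borel_measurable N"
proof -
  interpret PM: prob_space "pr \<Otimes>\<^sub>M mu" by (rule prob_space_pair[OF prp mup])
  have S: "sets ((N \<Otimes>\<^sub>M (pr \<Otimes>\<^sub>M mu)) \<Otimes>\<^sub>M lborel) = sets ((N \<Otimes>\<^sub>M (borel \<Otimes>\<^sub>M borel)) \<Otimes>\<^sub>M borel)"
    by (intro sets_pair_measure_cong sets_pm prs mus refl) simp
  have base: "(\<lambda>p. ss_lik X n lam (z (fst (fst p))) (snd p) (snd (snd (fst p))) * slab_dens (fst (snd (fst p))) (snd p :: real^'k))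
          \<in> borel_measurable ((N \<Otimes>\<^sub>M (pr \<Otimes>\<^sub>M mu)) \<Otimes>\<^sub>M lborel)"
    using integrand_meas[OF zm] by (simp add: measurable_cong_sets[OF S refl])
  have i1: "case_prod (\<lambda>\<omega>gs b. b $ k * ss_lik X n lam (z (fst \<omega>gs)) b (snd (snd \<omega>gs)) * slab_dens (fst (snd \<omega>gs)) b)
      \<in> borel_measurable ((N \<Otimes>\<^sub>M (pr \<Otimes>\<^sub>M mu)) \<Otimes>\<^sub>M lborel)"
  proof -
    have "(\<lambda>p. (snd p :: real^'k) $ k * (ss_lik X n lam (z (fst (fst p))) (snd p) (snd (snd (fst p))) * slab_dens (fst (snd (fst p))) (snd p)))
          \<in> borel_measurable ((N \<Otimes>\<^sub>M (pr \<Otimes>\<^sub>M mu)) \<Otimes>\<^sub>M lborel)"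
      using base by measurable
    then show ?thesis by (simp add: split_beta' mult.assoc)
  qed
  have i2: "case_prod (\<lambda>\<omega>gs b. ss_lik X n lam (z (fst \<omega>gs)) b (snd (snd \<omega>gs)) * slab_dens (fst (snd \<omega>gs)) b)
      \<in> borel_measurable ((N \<Otimes>\<^sub>M (pr \<Otimes>\<^sub>M mu)) \<Otimes>\<^sub>M lborel)"
    using base by (simp add: split_beta')
  have o1: "case_prod (\<lambda>\<omega> gs. \<integral>b. b $ k * ss_lik X n lam (z \<omega>) b (snd gs) * slab_dens (fst gs) b \<partial>lborel)
      \<in> borel_measurable (N \<Otimes>\<^sub>M (pr \<Otimes>\<^sub>M mu))"
    using lborel.borel_measurable_lebesgue_integral[OF i1] by (simp add: split_beta')
  have o2: "case_prod (\<lambda>\<omega> gs. \<integral>b. ss_lik X n lam (z \<omega>) b (snd gs) * slab_dens (fst gs) b \<partial>lborel)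
      \<in> borel_measurable (N \<Otimes>\<^sub>M (pr \<Otimes>\<^sub>M mu))"
    using lborel.borel_measurable_lebesgue_integral[OF i2] by (simp add: split_beta')
  show ?thesis
    unfolding post_mean_def vec_lambda_beta
    by (intro borel_measurable_divide PM.borel_measurable_lebesgue_integral o1 o2)
qed

lemma pow_le_exp: "x \<ge> 0 \<Longrightarrow> n > 0 \<Longrightarrow> (x / real n) ^ n \<le> exp x"
proof -
  assume x: "x \<ge> 0" and n: "n > 0"
  have "(x / real n) ^ n \<le> exp (x / real n) ^ n"
    using x by (intro power_mono) (auto intro: order_trans[OF _ exp_ge_add_one_self])
  also have "\<dots> = exp x" using n by (simp add: exp_of_nat_mult[symmetric])
  finally show ?thesis .
qed

lemma Qf_bound:
  assumes R: "R > 0" and n: "n > 0" and s: "s > 0"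
  shows "Qf n R s \<le> 1 + (2 * real n / R) ^ n"
proof -
  define u where "u = 1 / (s * real n)"
  have u: "u > 0" using s n by (simp add: u_def)
  have e1: "1 / sqrt (2 * pi * (s * real n)) \<le> sqrt u"
  proof -
    have "sqrt (s * real n) \<le> sqrt (2 * pi * (s * real n))"
      using s n pi_gt3 by (intro real_sqrt_le_mono) (auto intro!: mult_right_mono[of 1 "2*pi", simplified])
    then have "1 / sqrt (2 * pi * (s * real n)) \<le> 1 / sqrt (s * real n)"
      using s n by (intro divide_left_mono) auto
    also have "\<dots> = sqrt u" by (simp add: u_def real_sqrt_divide)
    finally show ?thesis .
  qed
  have e2: "- R / (2 * (s * real n)) = - (R * u / 2)" by (simp add: u_def)
  have "Qf n R s \<le> sqrt u ^ n * exp (- (R * u / 2))"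
    unfolding Qf_def e2 using s n by (intro mult_right_mono power_mono e1) (auto intro!: mult_nonneg_nonneg)
  also have "\<dots> \<le> 1 + (2 * real n / R) ^ n"
  proof (cases "u \<le> 1")
    case True
    then have "sqrt u ^ n \<le> 1" using u by (simp add: power_le_one)
    moreover have "exp (- (R * u / 2)) \<le> 1" using R u by simp
    ultimately have "sqrt u ^ n * exp (- (R * u / 2)) \<le> 1"
      by (metis mult_le_one exp_ge_zero real_sqrt_ge_zero u less_imp_le zero_le_power)
    then show ?thesis by (smt (verit) zero_le_power R n divide_nonneg_nonneg of_nat_0_le_iff)
  next
    case False
    then have "sqrt u \<le> u" using u by (smt (verit) real_sqrt_le_iff real_sqrt_ge_one real_sqrt_less_mono real_sqrt_mult_self mult_le_cancel_left1)
    then have a: "sqrt u ^ n \<le> u ^ n" using u by (intro power_mono) auto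
    have uu: "(2 * real n / R) * ((R * u / 2) / real n) = u" using R n by (simp add: field_simps)
    have "u ^ n = (2 * real n / R) ^ n * ((R * u / 2) / real n) ^ n"
      by (subst uu[symmetric], rule power_mult_distrib)
    also have "\<dots> \<le> (2 * real n / R) ^ n * exp (R * u / 2)"
      using R u n by (intro mult_left_mono pow_le_exp) auto
    finally have "u ^ n * exp (- (R * u / 2)) \<le> (2 * real n / R) ^ n * exp (R * u / 2) * exp (- (R * u / 2))"
      by (intro mult_right_mono) auto
    also have "\<dots> = (2 * real n / R) ^ n" by (simp add: exp_minus field_simps)
    finally have b: "u ^ n * exp (- (R * u / 2)) \<le> (2 * real n / R) ^ n" .
    have "sqrt u ^ n * exp (- (R * u / 2)) \<le> u ^ n * exp (- (R * u / 2))"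
      using a by (intro mult_right_mono) auto
    with b have "sqrt u ^ n * exp (- (R * u / 2)) \<le> (2 * real n / R) ^ n" by linarith
    then show ?thesis by simp
  qed
  finally show ?thesis .
qed

lemma cc_le1: "s > 0 \<Longrightarrow> g > 0 \<Longrightarrow> cc s g m \<le> 1"
  unfolding cc_def
  by (rule mult_le_one) auto

lemma integrand_meas2:
  shows "(\<lambda>p. ss_lik X n lam z (snd p) (snd (fst p)) * slab_dens (fst (fst p)) (snd p :: real^'k))
          \<in> borel_measurable ((borel \<Otimes>\<^sub>M borel) \<Otimes>\<^sub>M borel)"
  unfolding ss_lik_def slab_dens_def normal_density_def by measurable

lemma post_mean_struct:
  fixes pr :: "(real^'k) measure" and mu :: "real measure"
  assumes hg: "gram X n = real n *\<^sub>R mat 1" and n: "n > 0"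
    and prp: "prob_space pr" and prs: "sets pr = sets borel"
    and mup: "prob_space mu" and mus: "sets mu = sets borel"
    and eta0: "eta0 > 0" and pr_supp: "AE g in pr. \<forall>k. g $ k \<ge> eta0"
    and s0: "s0 > 0" and mu_pos: "AE s in mu. s > 0" and mu_supp: "AE s in mu. s \<le> s0"
    and R: "Rz X n z > 0"
  shows "\<exists>\<rho>. eta0 / (eta0 + s0) \<le> \<rho> \<and> \<rho> \<le> 1 \<and> post_mean pr mu (real n) X n z $ k = \<rho> * mvec X n z $ k"
proof -
  interpret PP: pair_prob_space pr mu
    by (simp add: pair_prob_space_def pair_sigma_finite_def prob_space_imp_sigma_finite prp mup)
  let ?m = "mvec X n z"
  let ?R = "Rz X n z"
  define P where "P = (\<lambda>gs::(real^'k) \<times> real. (\<forall>j. fst gs $ j \<ge> eta0) \<and> 0 < snd gs \<and> snd gs \<le> s0)"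
  define Dg where "Dg = (\<lambda>gs::(real^'k) \<times> real. \<integral>b. ss_lik X n (real n) z b (snd gs) * slab_dens (fst gs) b \<partial>lborel)"
  define Ng where "Ng = (\<lambda>gs::(real^'k) \<times> real. \<integral>b. b $ k * ss_lik X n (real n) z b (snd gs) * slab_dens (fst gs) b \<partial>lborel)"
  define Df where "Df = (\<lambda>gs::(real^'k) \<times> real. Qf n ?R (snd gs) * (\<Prod>j\<in>UNIV. cc (snd gs) (fst gs $ j) (?m $ j)))"
  define wf where "wf = (\<lambda>gs::(real^'k) \<times> real. fst gs $ k / (fst gs $ k + snd gs))"
  define B where "B = 1 + (2 * real n / ?R) ^ n"
  have S: "sets ((pr \<Otimes>\<^sub>M mu) \<Otimes>\<^sub>M lborel) = sets ((borel \<Otimes>\<^sub>M borel) \<Otimes>\<^sub>M borel)"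
    by (intro sets_pair_measure_cong prs mus) simp
  have S2: "sets (pr \<Otimes>\<^sub>M mu) = sets (borel \<Otimes>\<^sub>M borel)"
    by (intro sets_pair_measure_cong prs mus)
  have base: "(\<lambda>p. ss_lik X n (real n) z (snd p) (snd (fst p)) * slab_dens (fst (fst p)) (snd p :: real^'k))
          \<in> borel_measurable ((pr \<Otimes>\<^sub>M mu) \<Otimes>\<^sub>M lborel)"
    using integrand_meas2 by (simp add: measurable_cong_sets[OF S refl])
  have Dg_m: "Dg \<in> borel_measurable (pr \<Otimes>\<^sub>M mu)"
  proof -
    have "case_prod (\<lambda>gs b. ss_lik X n (real n) z b (snd gs) * slab_dens (fst gs) b) \<in> borel_measurable ((pr \<Otimes>\<^sub>M mu) \<Otimes>\<^sub>M lborel)"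
      using base by (simp add: split_beta')
    from lborel.borel_measurable_lebesgue_integral[OF this] show ?thesis unfolding Dg_def .
  qed
  have Ng_m: "Ng \<in> borel_measurable (pr \<Otimes>\<^sub>M mu)"
  proof -
    have "(\<lambda>p. (snd p :: real^'k) $ k * (ss_lik X n (real n) z (snd p) (snd (fst p)) * slab_dens (fst (fst p)) (snd p)))
          \<in> borel_measurable ((pr \<Otimes>\<^sub>M mu) \<Otimes>\<^sub>M lborel)"
      using base by measurable
    then have "case_prod (\<lambda>gs b. b $ k * ss_lik X n (real n) z b (snd gs) * slab_dens (fst gs) b) \<in> borel_measurable ((pr \<Otimes>\<^sub>M mu) \<Otimes>\<^sub>M lborel)"
      by (simp add: split_beta' mult.assoc)
    from lborel.borel_measurable_lebesgue_integral[OF this] show ?thesis unfolding Ng_def .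
  qed
  have Df_m: "Df \<in> borel_measurable (pr \<Otimes>\<^sub>M mu)"
  proof -
    have "Df \<in> borel_measurable (borel \<Otimes>\<^sub>M borel)" unfolding Df_def Qf_def cc_def by measurable
    then show ?thesis by (simp add: measurable_cong_sets[OF S2 refl])
  qed
  have wf_m: "wf \<in> borel_measurable (pr \<Otimes>\<^sub>M mu)"
  proof -
    have "wf \<in> borel_measurable (borel \<Otimes>\<^sub>M borel)" unfolding wf_def by measurable
    then show ?thesis by (simp add: measurable_cong_sets[OF S2 refl])
  qed
  have AEP: "AE gs in pr \<Otimes>\<^sub>M mu. P gs"
  proof (rule PP.AE_pair_measure)
    have "Measurable.pred (borel \<Otimes>\<^sub>M borel) P" unfolding P_def by measurable
    then have "Measurable.pred (pr \<Otimes>\<^sub>M mu) P" by (simp add: measurable_cong_sets[OF S2 refl])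
    then show "{x \<in> space (pr \<Otimes>\<^sub>M mu). P x} \<in> sets (pr \<Otimes>\<^sub>M mu)" by measurable
    have ms: "AE s in mu. 0 < s \<and> s \<le> s0" using mu_pos mu_supp by eventually_elim auto
    from pr_supp show "AE g in pr. AE s in mu. P (g, s)"
    proof eventually_elim
      case (elim g)
      from ms show ?case by eventually_elim (use elim in \<open>auto simp: P_def\<close>)
    qed
  qed
  have Pfacts: "P gs \<Longrightarrow> snd gs > 0 \<and> (\<forall>j. fst gs $ j > 0)" for gs
    unfolding P_def using eta0 by (auto intro: less_le_trans)
  have DgDf: "AE gs in pr \<Otimes>\<^sub>M mu. Dg gs = Df gs"
    using AEP proof eventually_elim
    case (elim gs)
    with Pfacts[OF elim] show ?case unfolding Dg_def Df_def
      by (intro D_integral[OF hg n]) auto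
  qed
  have NgDf: "AE gs in pr \<Otimes>\<^sub>M mu. Ng gs = ?m $ k * (wf gs * Df gs)"
    using AEP proof eventually_elim
    case (elim gs)
    with Pfacts[OF elim] have "Ng gs = mu' (snd gs) (fst gs $ k) (?m $ k) * Df gs"
      unfolding Ng_def Df_def by (intro N_integral[OF hg n]) auto
    then show ?case by (simp add: mu'_def wf_def)
  qed
  have Df_pos: "AE gs in pr \<Otimes>\<^sub>M mu. Df gs > 0"
    using AEP proof eventually_elim
    case (elim gs)
    with Pfacts[OF elim] show ?case unfolding Df_def Qf_def
      by (intro mult_pos_pos prod_pos cc_pos) (auto simp: n)
  qed
  have Df_le: "AE gs in pr \<Otimes>\<^sub>M mu. Df gs \<le> B"
    using AEP proof eventually_elim
    case (elim gs)
    have sp: "snd gs > 0" and gp: "\<And>j. fst gs $ j > 0" using Pfacts[OF elim] by auto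
    have "Df gs \<le> Qf n ?R (snd gs) * 1"
      unfolding Df_def using sp gp
      by (intro mult_left_mono prod_le_1) (auto simp: Qf_def cc_le1 less_imp_le[OF cc_pos])
    also have "\<dots> \<le> B" unfolding B_def using Qf_bound[OF R n sp] by simp
    finally show ?case .
  qed
  have wf_01: "AE gs in pr \<Otimes>\<^sub>M mu. eta0 / (eta0 + s0) \<le> wf gs \<and> wf gs \<le> 1"
    using AEP proof eventually_elim
    case (elim gs)
    have g: "fst gs $ k \<ge> eta0" and s: "0 < snd gs" "snd gs \<le> s0" using elim by (auto simp: P_def)
    have "eta0 / (eta0 + s0) \<le> fst gs $ k / (fst gs $ k + snd gs)"
    proof -
      have "eta0 * snd gs \<le> fst gs $ k * s0" using g s eta0 by (intro mult_mono) auto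
      then have "eta0 * (fst gs $ k + snd gs) \<le> fst gs $ k * (eta0 + s0)" by (simp add: algebra_simps)
      moreover have "eta0 + s0 > 0" "fst gs $ k + snd gs > 0" using g s eta0 s0 by auto
      ultimately show ?thesis by (simp add: divide_simps)
    qed
    moreover have "fst gs $ k / (fst gs $ k + snd gs) \<le> 1" using g s eta0 by simp
    ultimately show ?case by (simp add: wf_def)
  qed
  have Df_int: "integrable (pr \<Otimes>\<^sub>M mu) Df"
  proof (rule PP.integrable_const_bound[where B=B])
    show "AE x in pr \<Otimes>\<^sub>M mu. norm (Df x) \<le> B" using Df_pos Df_le by eventually_elim auto
  qed (rule Df_m)
  have wDf_int: "integrable (pr \<Otimes>\<^sub>M mu) (\<lambda>gs. wf gs * Df gs)"
  proof (rule PP.integrable_const_bound[where B=B])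
    show "AE x in pr \<Otimes>\<^sub>M mu. norm (wf x * Df x) \<le> B"
      using Df_pos Df_le wf_01 proof eventually_elim
      case (elim x)
      have "wf x \<ge> 0" using elim(3) eta0 s0 by (smt (verit) divide_pos_pos)
      then have "norm (wf x * Df x) = wf x * Df x" using elim by simp
      also have "\<dots> \<le> 1 * Df x" using elim by (intro mult_right_mono) auto
      finally show ?case using elim by simp
    qed
  qed (use wf_m Df_m in measurable)
  have intD: "(\<integral>gs. Dg gs \<partial>(pr \<Otimes>\<^sub>M mu)) = (\<integral>gs. Df gs \<partial>(pr \<Otimes>\<^sub>M mu))"
    by (rule integral_cong_AE[OF Dg_m Df_m DgDf])
  have intN: "(\<integral>gs. Ng gs \<partial>(pr \<Otimes>\<^sub>M mu)) = ?m $ k * (\<integral>gs. wf gs * Df gs \<partial>(pr \<Otimes>\<^sub>M mu))"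
  proof -
    have "(\<integral>gs. Ng gs \<partial>(pr \<Otimes>\<^sub>M mu)) = (\<integral>gs. ?m $ k * (wf gs * Df gs) \<partial>(pr \<Otimes>\<^sub>M mu))"
      by (rule integral_cong_AE[OF Ng_m _ NgDf]) (use wf_m Df_m in measurable)
    then show ?thesis by simp
  qed
  define A where "A = (\<integral>gs. Df gs \<partial>(pr \<Otimes>\<^sub>M mu))"
  define W where "W = (\<integral>gs. wf gs * Df gs \<partial>(pr \<Otimes>\<^sub>M mu))"
  have A_pos: "A > 0"
  proof -
    have A0: "A \<ge> 0" unfolding A_def using Df_pos by (intro integral_nonneg_AE) (auto elim: eventually_mono)
    have "A \<noteq> 0"
    proof
      assume "A = 0"
      moreover have "AE gs in pr \<Otimes>\<^sub>M mu. 0 \<le> Df gs" using Df_pos by eventually_elim auto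
      ultimately have "AE gs in pr \<Otimes>\<^sub>M mu. Df gs = 0"
        using integral_nonneg_eq_0_iff_AE[OF Df_int] unfolding A_def by auto
      with Df_pos have "AE gs in pr \<Otimes>\<^sub>M mu. False" by eventually_elim auto
      then show False by simp
    qed
    with A0 show ?thesis by simp
  qed
  have W_lo: "eta0 / (eta0 + s0) * A \<le> W"
  proof -
    have "eta0 / (eta0 + s0) * A = (\<integral>gs. eta0 / (eta0 + s0) * Df gs \<partial>(pr \<Otimes>\<^sub>M mu))"
      unfolding A_def by simp
    also have "\<dots> \<le> W" unfolding W_def
    proof (intro integral_mono_AE integrable_mult_right Df_int wDf_int)
      show "AE gs in pr \<Otimes>\<^sub>M mu. eta0 / (eta0 + s0) * Df gs \<le> wf gs * Df gs"
        using Df_pos wf_01 proof eventually_elim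
        case (elim gs)
        then show ?case using mult_right_mono[of "eta0 / (eta0 + s0)" "wf gs" "Df gs"] by simp
      qed
    qed
    finally show ?thesis .
  qed
  have W_hi: "W \<le> A"
    unfolding W_def A_def
  proof (intro integral_mono_AE Df_int wDf_int)
    show "AE gs in pr \<Otimes>\<^sub>M mu. wf gs * Df gs \<le> Df gs"
      using Df_pos wf_01 by eventually_elim (auto intro: mult_left_le_one_le)
  qed
  have pm: "post_mean pr mu (real n) X n z $ k = (?m $ k * W) / A"
    unfolding post_mean_def vec_lambda_beta Ng_def[symmetric] Dg_def[symmetric] intD intN A_def W_def ..
  show ?thesis
  proof (intro exI conjI)
    show "eta0 / (eta0 + s0) \<le> W / A" using W_lo A_pos by (simp add: field_simps)
    show "W / A \<le> 1" using W_hi A_pos by simp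
    show "post_mean pr mu (real n) X n z $ k = W / A * ?m $ k" unfolding pm by simp
  qed
qed

lemma (in prob_space) indep_pair:
  fixes Z :: "nat \<Rightarrow> 'a \<Rightarrow> real"
  assumes indep: "indep_vars (\<lambda>_. borel) Z UNIV" and ij: "i \<noteq> j"
  shows "indep_var borel (Z i) borel (Z j)"
proof -
  have "indep_var
    borel ((\<lambda>f. f i) \<circ> (\<lambda>\<omega>. restrict (\<lambda>i. Z i \<omega>) {i}))
    borel ((\<lambda>f. f j) \<circ> (\<lambda>\<omega>. restrict (\<lambda>i. Z i \<omega>) {j}))"
    using ij by (intro indep_var_compose[OF indep_var_restrict[OF indep]]) auto
  also have "((\<lambda>f. f i) \<circ> (\<lambda>\<omega>. restrict (\<lambda>i. Z i \<omega>) {i})) = Z i" by auto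
  also have "((\<lambda>f. f j) \<circ> (\<lambda>\<omega>. restrict (\<lambda>i. Z i \<omega>) {j})) = Z j" by auto
  finally show ?thesis .
qed

lemma (in prob_space) sum_sq_indep:
  fixes Z :: "nat \<Rightarrow> 'a \<Rightarrow> real"
  assumes indep: "indep_vars (\<lambda>_. borel) Z UNIV"
    and meas: "\<And>i. Z i \<in> borel_measurable M"
    and sq: "\<And>i. integrable M (\<lambda>\<omega>. (Z i \<omega>)\<^sup>2)"
    and mean: "\<And>i. expectation (Z i) = 0"
  shows "integrable M (\<lambda>\<omega>. (\<Sum>i<n. a i * Z i \<omega>)\<^sup>2)"
    and "expectation (\<lambda>\<omega>. (\<Sum>i<n. a i * Z i \<omega>)\<^sup>2) = (\<Sum>i<n. (a i)\<^sup>2 * expectation (\<lambda>\<omega>. (Z i \<omega>)\<^sup>2))"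
proof -
  have int1: "integrable M (Z i)" for i
    using square_integrable_imp_integrable[OF meas sq] .
  have intp: "integrable M (\<lambda>\<omega>. Z i \<omega> * Z j \<omega>)" for i j
  proof (cases "i = j")
    case True then show ?thesis using sq[of i] by (simp add: power2_eq_square)
  next
    case False then show ?thesis using indep_var_integrable[OF indep_pair[OF indep False] int1 int1] by simp
  qed
  have ep: "expectation (\<lambda>\<omega>. Z i \<omega> * Z j \<omega>) = (if i = j then expectation (\<lambda>\<omega>. (Z i \<omega>)\<^sup>2) else 0)" for i j
  proof (cases "i = j")
    case True then show ?thesis by (simp add: power2_eq_square)
  next
    case False then show ?thesis
      using indep_var_lebesgue_integral[OF indep_pair[OF indep False] int1 int1] mean by simp
  qed
  have ex: "(\<Sum>i<n. a i * Z i \<omega>)\<^sup>2 = (\<Sum>i<n. \<Sum>j<n. a i * a j * (Z i \<omega> * Z j \<omega>))" for \<omega>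
    by (simp add: power2_eq_square sum_product mult_ac)
  show "integrable M (\<lambda>\<omega>. (\<Sum>i<n. a i * Z i \<omega>)\<^sup>2)"
    unfolding ex by (auto intro!: integrable_sum integrable_mult_right intp)
  have "expectation (\<lambda>\<omega>. (\<Sum>i<n. a i * Z i \<omega>)\<^sup>2) = (\<Sum>i<n. \<Sum>j<n. a i * a j * expectation (\<lambda>\<omega>. Z i \<omega> * Z j \<omega>))"
    unfolding ex by (simp add: integral_sum integrable_sum integrable_mult_right intp)
  also have "\<dots> = (\<Sum>i<n. (a i)\<^sup>2 * expectation (\<lambda>\<omega>. (Z i \<omega>)\<^sup>2))"
    unfolding ep by (simp add: if_distrib power2_eq_square cong: if_cong)
  finally show "expectation (\<lambda>\<omega>. (\<Sum>i<n. a i * Z i \<omega>)\<^sup>2) = (\<Sum>i<n. (a i)\<^sup>2 * expectation (\<lambda>\<omega>. (Z i \<omega>)\<^sup>2))" .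
qed

lemma Xty_add: "Xty X n (\<lambda>i. f i + g i) = Xty X n f + Xty X n g"
  by (simp add: Xty_def vec_eq_iff sum.distrib algebra_simps)

lemma Xty_scale: "Xty X n (\<lambda>i. c * f i) = c *\<^sub>R Xty X n f"
  by (simp add: Xty_def vec_eq_iff sum_distrib_left mult_ac)

lemma Xty_design:
  assumes hg: "gram X n = real n *\<^sub>R mat 1"
  shows "Xty X n (\<lambda>i. X i \<bullet> b) = real n *\<^sub>R b"
proof -
  have "(\<Sum>i<n. X i $ j * (X i \<bullet> b)) = real n * b $ j" for j
  proof -
    have "(\<Sum>i<n. X i $ j * (X i \<bullet> b)) = (\<Sum>i<n. \<Sum>l\<in>UNIV. b $ l * (X i $ j * X i $ l))"
      by (simp add: inner_real_vec sum_distrib_left mult_ac)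
    also have "\<dots> = (\<Sum>l\<in>UNIV. b $ l * (\<Sum>i<n. X i $ j * X i $ l))"
      by (subst sum.swap) (simp add: sum_distrib_left)
    also have "\<dots> = (\<Sum>l\<in>UNIV. if j = l then real n * b $ j else 0)"
      by (rule sum.cong) (auto simp: gram_entry[OF hg])
    finally show ?thesis by simp
  qed
  then show ?thesis by (simp add: Xty_def vec_eq_iff)
qed

lemma mvec_Y:
  assumes hg: "gram X n = real n *\<^sub>R mat 1" and n: "n > 0"
  shows "mvec X n (\<lambda>i. X i \<bullet> b + e i) = b + mvec X n e"
  using n by (simp add: mvec_def Xty_add Xty_design[OF hg] scaleR_add_right)

lemma Rz_resid:
  assumes hg: "gram X n = real n *\<^sub>R mat 1" and n: "n > 0"
  shows "Rz X n y = (\<Sum>i<n. (y i - X i \<bullet> mvec X n y)\<^sup>2)"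
  using resid_decomp[OF hg n, of y "mvec X n y"] by simp

lemma sigma_hat_Rz:
  fixes X :: "nat \<Rightarrow> real^'k"
  assumes hg: "gram X n = real n *\<^sub>R mat 1" and n: "n > 0"
  shows "sigma_hat_sq X n y = Rz X n y / (real n - real CARD('k))"
  unfolding sigma_hat_sq_def ols_eq[OF hg n] mvec_def[symmetric] Rz_resid[OF hg n] ..

lemma Rz_Y:
  assumes hg: "gram X n = real n *\<^sub>R mat 1" and n: "n > 0"
  shows "Rz X n (\<lambda>i. X i \<bullet> b + e i) = (\<Sum>i<n. (e i)\<^sup>2) - real n * (mvec X n e \<bullet> mvec X n e)"
proof -
  let ?u = "mvec X n e"
  have xt: "Xty X n e = real n *\<^sub>R ?u" using n by (simp add: mvec_def)
  have "Rz X n (\<lambda>i. X i \<bullet> b + e i) = (\<Sum>i<n. (e i - X i \<bullet> ?u)\<^sup>2)"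
    unfolding Rz_resid[OF hg n] mvec_Y[OF hg n] by (simp add: inner_add_right)
  also have "\<dots> = (\<Sum>i<n. (e i)\<^sup>2) - 2 * (Xty X n e \<bullet> ?u) + real n * (?u \<bullet> ?u)"
    by (rule resid_expand[OF hg])
  also have "\<dots> = (\<Sum>i<n. (e i)\<^sup>2) - real n * (?u \<bullet> ?u)"
    unfolding xt by simp
  finally show ?thesis .
qed

lemma mvec_scale: "mvec X n (\<lambda>i. c * y i) = c *\<^sub>R mvec X n y"
  by (simp add: mvec_def Xty_scale)

lemma Rz_scale: "Rz X n (\<lambda>i. c * y i) = c\<^sup>2 * Rz X n y"
  by (simp add: Rz_def mvec_scale power_mult_distrib sum_distrib_left algebra_simps power2_eq_square)

lemma mvec_comp: "mvec X n e $ k = (\<Sum>i<n. X i $ k * e i) / real n"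
  by (simp add: mvec_def Xty_def)

lemma nuu: "n > 0 \<Longrightarrow> real n * (mvec X n e \<bullet> mvec X n e) = (\<Sum>k\<in>UNIV. (\<Sum>i<n. X i $ k * e i)\<^sup>2 / real n)"
  by (simp add: inner_real_vec mvec_comp sum_distrib_left power2_eq_square)

lemma det_core:
  fixes X :: "nat \<Rightarrow> real^'k" and pr :: "(real^'k) measure" and mu :: "real measure"
    and beta0 :: "real^'k" and e :: "nat \<Rightarrow> real" and dl :: "'k \<Rightarrow> real"
  assumes hg: "gram X n = real n *\<^sub>R mat 1"
    and nK: "n > CARD('k)" and n2K: "real n \<ge> 2 * real CARD('k)"
    and prp: "prob_space pr" and prs: "sets pr = sets borel"
    and mup: "prob_space mu" and mus: "sets mu = sets borel"
    and eta0: "eta0 > 0" and pr_supp: "AE g in pr. \<forall>k. g $ k \<ge> eta0"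
    and s0: "s0 > 0" and mu_pos: "AE s in mu. s > 0" and mu_supp: "AE s in mu. s \<le> s0"
    and v: "v > 0" and C: "C > 0"
    and hS: "\<bar>(\<Sum>i<n. (e i)\<^sup>2) - real n * v\<bar> < real n * v / 2"
    and hT1: "\<And>k. (\<Sum>i<n. X i $ k * e i)\<^sup>2 / real n < v * C\<^sup>2 / 4"
    and hT2: "\<And>k. (\<Sum>i<n. X i $ k * e i)\<^sup>2 / real n < real n * dl k"
    and dl1: "\<And>k. dl k \<le> v / (4 * real CARD('k))"
    and dl2: "\<And>k. beta0 $ k \<noteq> 0 \<Longrightarrow> dl k \<le> (beta0 $ k)\<^sup>2 / 4"
    and hC: "\<And>k. beta0 $ k \<noteq> 0 \<Longrightarrow> C / sqrt (real n) < eta0 / (eta0 + s0) * \<bar>beta0 $ k\<bar> / (2 * sqrt (3 * v))"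
  shows "model_hat (post_mean pr mu (real n) X n (rescaled X n (\<lambda>i. X i \<bullet> beta0 + e i))) C = model_true beta0"
proof -
  have n: "n > 0" using nK by simp
  have rn: "real n > 0" using n by simp
  define Y where "Y = (\<lambda>i. X i \<bullet> beta0 + e i)"
  define u where "u = mvec X n e"
  define S where "S = (\<Sum>i<n. (e i)\<^sup>2)"
  define T where "T = (\<lambda>k. \<Sum>i<n. X i $ k * e i)"
  define V where "V = real n * (u \<bullet> u)"
  define K where "K = real CARD('k)"
  have K0: "K > 0" unfolding K_def by simp
  have V_eq: "V = (\<Sum>k\<in>UNIV. (T k)\<^sup>2 / real n)" unfolding V_def u_def T_def by (rule nuu[OF n])
  have V_lt: "V < real n * v / 4"
  proof -
    have "V < (\<Sum>k\<in>(UNIV::'k set). real n * dl k)"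
      unfolding V_eq T_def by (rule sum_strict_mono) (auto intro: hT2)
    also have "\<dots> \<le> (\<Sum>k\<in>(UNIV::'k set). real n * (v / (4 * K)))"
      unfolding K_def by (rule sum_mono, rule mult_left_mono) (use rn dl1 in auto)
    also have "\<dots> = real n * v / 4" using K0 by (simp add: K_def)
    finally show ?thesis .
  qed
  have V_ge: "V \<ge> 0" unfolding V_def using rn by simp
  have hS': "S - real n * v < real n * v / 2 \<and> - (S - real n * v) < real n * v / 2"
    using hS unfolding S_def by (simp only: abs_less_iff)
  have S_lo: "S > real n * v / 2" and S_hi: "S < 3 / 2 * (real n * v)" using hS' by linarith+
  have RzY: "Rz X n Y = S - V" unfolding Y_def S_def V_def u_def by (rule Rz_Y[OF hg n])
  have nK': "real n - K > 0" "real n - K \<le> real n" "real n \<le> 2 * (real n - K)"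
  proof -
    have "real CARD('k) < real n" using nK by simp
    then show "real n - K > 0" unfolding K_def by linarith
    show "real n - K \<le> real n" using K0 by linarith
    show "real n \<le> 2 * (real n - K)" using n2K unfolding K_def by (simp add: algebra_simps)
  qed
  define sh where "sh = sigma_hat_sq X n Y"
  have sh_eq: "sh = (S - V) / (real n - K)" unfolding sh_def sigma_hat_Rz[OF hg n] RzY K_def ..
  have SV: "S - V > real n * v / 4" using S_lo V_lt by simp
  have SVp: "S - V > 0" using SV rn v by (smt (verit) divide_pos_pos mult_pos_pos)
  have sh_pos: "sh > 0" unfolding sh_eq using SVp nK' by simp
  have sh_lo: "sh > v / 4"
  proof -
    have "(S - V) / real n \<le> sh" unfolding sh_eq using SVp nK' by (intro divide_left_mono) auto
    moreover have "(S - V) / real n > v / 4" using SV rn by (simp add: field_simps)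
    ultimately show ?thesis by linarith
  qed
  have sh_hi: "sh < 3 * v"
  proof -
    have "sh \<le> S / (real n - K)" unfolding sh_eq using V_ge nK' by (intro divide_right_mono) auto
    also have "\<dots> < 3 / 2 * (real n * v) / (real n - K)" using S_hi nK' by (intro divide_strict_right_mono) auto
    also have "\<dots> \<le> 3 * v" using nK' v by (simp add: field_simps)
    finally show ?thesis .
  qed
  define c where "c = sqrt (real n) / sqrt sh"
  have c_pos: "c > 0" unfolding c_def using rn sh_pos by simp
  have c2: "c\<^sup>2 = real n / sh" unfolding c_def using rn sh_pos by (simp add: power_divide)
  have resc: "rescaled X n Y = (\<lambda>i. c * Y i)"
    unfolding rescaled_def c_def sh_def by (rule ext) simp
  have Rz_pos: "Rz X n (rescaled X n Y) > 0"
  proof -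
    have "Rz X n (rescaled X n Y) = c\<^sup>2 * (S - V)" unfolding resc Rz_scale RzY ..
    then show ?thesis using c_pos SVp by simp
  qed
  have mY: "mvec X n (rescaled X n Y) = c *\<^sub>R (beta0 + u)"
    unfolding resc unfolding mvec_scale unfolding Y_def u_def mvec_Y[OF hg n] ..
  have u_k: "u $ k = T k / real n" for k unfolding u_def T_def by (rule mvec_comp)
  let ?c0 = "eta0 / (eta0 + s0)"
  have c0: "?c0 > 0" using eta0 s0 by simp
  show ?thesis
  proof (rule ext)
    fix k
    obtain \<rho> where \<rho>: "?c0 \<le> \<rho>" "\<rho> \<le> 1"
      and pk: "post_mean pr mu (real n) X n (rescaled X n Y) $ k = \<rho> * mvec X n (rescaled X n Y) $ k"
      using post_mean_struct[OF hg n prp prs mup mus eta0 pr_supp s0 mu_pos mu_supp Rz_pos] by blast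
    have rho0: "\<rho> > 0" using \<rho> c0 by simp
    have pk': "\<bar>post_mean pr mu (real n) X n (rescaled X n Y) $ k\<bar> = \<rho> * (c * \<bar>beta0 $ k + u $ k\<bar>)"
      unfolding pk mY using rho0 c_pos by (simp add: abs_mult)
    show "model_hat (post_mean pr mu (real n) X n (rescaled X n (\<lambda>i. X i \<bullet> beta0 + e i))) C k = model_true beta0 k"
    proof (cases "beta0 $ k = 0")
      case True
      have "(c * \<bar>u $ k\<bar>)\<^sup>2 = (T k)\<^sup>2 / real n / sh"
        unfolding power_mult_distrib c2 u_k using rn by (simp add: power_divide power2_eq_square field_simps)
      also have "\<dots> \<le> (T k)\<^sup>2 / real n / (v / 4)"
        using sh_lo v rn by (intro divide_left_mono) auto
      also have "\<dots> < (v * C\<^sup>2 / 4) / (v / 4)"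
        using hT1[of k] v unfolding T_def by (intro divide_strict_right_mono) auto
      also have "\<dots> = C\<^sup>2" using v by simp
      finally have "c * \<bar>u $ k\<bar> < C"
        by (rule power2_less_imp_less[OF _ less_imp_le[OF C]])
      moreover have "\<rho> * (c * \<bar>u $ k\<bar>) \<le> c * \<bar>u $ k\<bar>"
        using \<rho> c_pos rho0 by (intro mult_left_le_one_le) auto
      ultimately have "\<bar>post_mean pr mu (real n) X n (rescaled X n Y) $ k\<bar> < C"
        unfolding pk' using True by simp
      then show ?thesis using True unfolding model_hat_def model_true_def Y_def by simp
    next
      case False
      have "(u $ k)\<^sup>2 < (beta0 $ k)\<^sup>2 / 4"
      proof -
        have "(u $ k)\<^sup>2 = (T k)\<^sup>2 / real n / real n" unfolding u_k by (simp add: power_divide power2_eq_square)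
        also have "\<dots> < dl k" using hT2[of k] rn unfolding T_def by (simp add: field_simps)
        also have "\<dots> \<le> (beta0 $ k)\<^sup>2 / 4" using dl2[OF False] .
        finally show ?thesis .
      qed
      then have "\<bar>u $ k\<bar>\<^sup>2 < (\<bar>beta0 $ k\<bar> / 2)\<^sup>2" by (simp add: power_divide)
      then have "\<bar>u $ k\<bar> < \<bar>beta0 $ k\<bar> / 2"
        by (rule power2_less_imp_less) simp
      then have bu: "\<bar>beta0 $ k + u $ k\<bar> \<ge> \<bar>beta0 $ k\<bar> / 2" by linarith
      have csq: "c \<ge> sqrt (real n) / sqrt (3 * v)"
        unfolding c_def using sh_pos sh_hi rn by (intro divide_left_mono) auto
      have "C < ?c0 * \<bar>beta0 $ k\<bar> / (2 * sqrt (3 * v)) * sqrt (real n)"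
        using hC[OF False] rn by (simp add: divide_less_eq)
      also have "\<dots> = ?c0 * ((sqrt (real n) / sqrt (3 * v)) * (\<bar>beta0 $ k\<bar> / 2))" by (simp add: mult_ac)
      also have "\<dots> \<le> \<rho> * (c * \<bar>beta0 $ k + u $ k\<bar>)"
        using \<rho> c0 csq bu c_pos v by (intro mult_mono) auto
      finally have "\<bar>post_mean pr mu (real n) X n (rescaled X n Y) $ k\<bar> \<ge> C" unfolding pk' by simp
      then show ?thesis using False unfolding model_hat_def model_true_def Y_def by simp
    qed
  qed
qed

context prob_space
begin

lemma sq_le_1_4: "(t::real)\<^sup>2 \<le> 1 + t ^ 4"
proof -
  have "0 \<le> (t\<^sup>2 - 1/2)\<^sup>2" by simp
  then show ?thesis by (simp add: power2_eq_square power4_eq_xxxx algebra_simps)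
qed

lemma eps_sq_int:
  fixes eps :: "nat \<Rightarrow> 'a \<Rightarrow> real"
  assumes rv: "eps i \<in> borel_measurable M" and i4: "integrable M (\<lambda>\<omega>. (eps i \<omega>) ^ 4)"
  shows "integrable M (\<lambda>\<omega>. (eps i \<omega>)\<^sup>2)"
proof (rule Bochner_Integration.integrable_bound[where f="\<lambda>\<omega>. 1 + (eps i \<omega>) ^ 4"])
  show "integrable M (\<lambda>\<omega>. 1 + (eps i \<omega>) ^ 4)" using i4 by simp
  show "(\<lambda>\<omega>. (eps i \<omega>)\<^sup>2) \<in> borel_measurable M" using rv by measurable
  show "AE x in M. norm ((eps i x)\<^sup>2) \<le> norm (1 + (eps i x) ^ 4)"
    by (intro AE_I2) (simp add: sq_le_1_4 add_nonneg_nonneg)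
qed

lemma markov_T:
  fixes eps :: "nat \<Rightarrow> 'a \<Rightarrow> real" and a :: "nat \<Rightarrow> real"
  assumes indep: "indep_vars (\<lambda>_. borel) eps UNIV"
    and rv: "\<And>i. eps i \<in> borel_measurable M"
    and i4: "\<And>i. integrable M (\<lambda>\<omega>. (eps i \<omega>) ^ 4)"
    and mean: "\<And>i. expectation (eps i) = 0"
    and var: "\<And>i. expectation (\<lambda>\<omega>. (eps i \<omega>)\<^sup>2) = v"
    and sa: "(\<Sum>i<n. (a i)\<^sup>2) = real n" and n: "n > 0" and c: "c > 0"
  shows "prob {\<omega> \<in> space M. (\<Sum>i<n. a i * eps i \<omega>)\<^sup>2 / real n \<ge> c} \<le> v / c"
proof -
  have sq: "integrable M (\<lambda>\<omega>. (eps i \<omega>)\<^sup>2)" for i using eps_sq_int[OF rv i4] .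
  note S = sum_sq_indep[OF indep rv sq mean, where n=n and a=a]
  have int: "integrable M (\<lambda>\<omega>. (\<Sum>i<n. a i * eps i \<omega>)\<^sup>2 / real n)"
    using S(1) by simp
  have "prob {\<omega> \<in> space M. (\<Sum>i<n. a i * eps i \<omega>)\<^sup>2 / real n \<ge> c}
      \<le> expectation (\<lambda>\<omega>. (\<Sum>i<n. a i * eps i \<omega>)\<^sup>2 / real n) / c"
    by (rule integral_Markov_inequality_measure[OF int _ _ c, where A="space M"]) auto
  also have "expectation (\<lambda>\<omega>. (\<Sum>i<n. a i * eps i \<omega>)\<^sup>2 / real n) = v"
    using S(2) n by (simp add: var sum_distrib_right[symmetric] sa)
  finally show ?thesis .
qed

lemma cheb_S:
  fixes eps :: "nat \<Rightarrow> 'a \<Rightarrow> real"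
  assumes indep: "indep_vars (\<lambda>_. borel) eps UNIV"
    and rv: "\<And>i. eps i \<in> borel_measurable M"
    and i4: "\<And>i. integrable M (\<lambda>\<omega>. (eps i \<omega>) ^ 4)"
    and b4: "\<And>i. expectation (\<lambda>\<omega>. (eps i \<omega>) ^ 4) \<le> Mbd"
    and var: "\<And>i. expectation (\<lambda>\<omega>. (eps i \<omega>)\<^sup>2) = v"
    and n: "n > 0" and c: "c > 0"
  shows "prob {\<omega> \<in> space M. \<bar>(\<Sum>i<n. (eps i \<omega>)\<^sup>2) - real n * v\<bar> \<ge> c} \<le> real n * Mbd / c\<^sup>2"
proof -
  define Z where "Z = (\<lambda>i \<omega>. (eps i \<omega>)\<^sup>2 - v)"
  have sq: "integrable M (\<lambda>\<omega>. (eps i \<omega>)\<^sup>2)" for i using eps_sq_int[OF rv i4] .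
  have Zm: "Z i \<in> borel_measurable M" for i unfolding Z_def using rv by measurable
  have Zind: "indep_vars (\<lambda>_. borel) Z UNIV"
    unfolding Z_def by (rule indep_vars_compose2[OF indep]) measurable
  have Zsq_eq: "(Z i \<omega>)\<^sup>2 = (eps i \<omega>) ^ 4 - 2 * v * (eps i \<omega>)\<^sup>2 + v\<^sup>2" for i \<omega>
    unfolding Z_def by (simp add: power2_eq_square power4_eq_xxxx algebra_simps)
  have Zsq: "integrable M (\<lambda>\<omega>. (Z i \<omega>)\<^sup>2)" for i
    unfolding Zsq_eq
    by (rule Bochner_Integration.integrable_add[OF Bochner_Integration.integrable_diff[OF i4 integrable_mult_right[OF sq]] integrable_const])
  have Zmean: "expectation (Z i) = 0" for i
    unfolding Z_def using sq[of i] var[of i] by (simp add: prob_space)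
  have Zvar: "expectation (\<lambda>\<omega>. (Z i \<omega>)\<^sup>2) \<le> Mbd" for i
  proof -
    have "expectation (\<lambda>\<omega>. (Z i \<omega>)\<^sup>2) = expectation (\<lambda>\<omega>. (eps i \<omega>) ^ 4) - 2 * v * v + v\<^sup>2"
      unfolding Zsq_eq using i4[of i] sq[of i] var[of i]
      by (simp add: integral_add integral_diff integrable_diff prob_space)
    also have "\<dots> \<le> Mbd"
    proof -
      have "0 \<le> v * v" by simp
      then show ?thesis using b4[of i] unfolding power2_eq_square by linarith
    qed
    finally show ?thesis .
  qed
  note SS = sum_sq_indep[OF Zind Zm Zsq Zmean, where n=n and a="\<lambda>_. 1"]
  have eqS: "(\<Sum>i<n. (eps i \<omega>)\<^sup>2) - real n * v = (\<Sum>i<n. 1 * Z i \<omega>)" for \<omega>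
    unfolding Z_def by (simp add: sum_subtractf)
  have c2: "c\<^sup>2 > 0" using c by simp
  have "prob {\<omega> \<in> space M. \<bar>(\<Sum>i<n. (eps i \<omega>)\<^sup>2) - real n * v\<bar> \<ge> c}
      = prob {\<omega> \<in> space M. (\<Sum>i<n. 1 * Z i \<omega>)\<^sup>2 \<ge> c\<^sup>2}"
  proof -
    have "\<bar>x\<bar> \<ge> c \<longleftrightarrow> x\<^sup>2 \<ge> c\<^sup>2" for x :: real
      using c by (metis abs_le_square_iff abs_of_pos)
    then show ?thesis unfolding eqS by simp
  qed
  also have "\<dots> \<le> expectation (\<lambda>\<omega>. (\<Sum>i<n. 1 * Z i \<omega>)\<^sup>2) / c\<^sup>2"
    by (rule integral_Markov_inequality_measure[OF SS(1) _ _ c2, where A="space M"]) auto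
  also have "\<dots> \<le> real n * Mbd / c\<^sup>2"
  proof -
    have "expectation (\<lambda>\<omega>. (\<Sum>i<n. 1 * Z i \<omega>)\<^sup>2) \<le> (\<Sum>i<n. Mbd)"
      unfolding SS(2) by (intro sum_mono) (simp add: Zvar)
    then show ?thesis using c2 by (simp add: divide_right_mono)
  qed
  finally show ?thesis .
qed

end

lemma Rz_expl:
  "Rz X n y = (\<Sum>i<n. (y i)\<^sup>2) - real n * (\<Sum>k\<in>UNIV. ((\<Sum>i<n. X i $ k * y i) / real n)\<^sup>2)"
  by (simp add: Rz_def inner_real_vec mvec_comp power2_eq_square)

theorem theorem7:
  fixes x :: "nat \<Rightarrow> nat \<Rightarrow> real^'k"
    and beta0 :: "real^'k"
    and M :: "'a measure"
    and eps :: "nat \<Rightarrow> 'a \<Rightarrow> real"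
    and sigma0sq Mbd eta0 s0sq :: real
    and pr :: "(real^'k) measure"
    and mu :: "real measure"
    and C :: "nat \<Rightarrow> real"
  assumes design_orth: "\<And>n. n > CARD('k) \<Longrightarrow> gram (x n) n = real n *\<^sub>R mat 1"
    and design_centered: "\<And>n k. n > CARD('k) \<Longrightarrow> (\<Sum>i<n. x n i $ k) = 0"
    and design_max: "(\<lambda>n. Max ((\<lambda>i. norm (x n i)) ` {..<n}) / sqrt (real n)) \<longlonglongrightarrow> 0"
    and P: "prob_space M"
    and eps_rv: "\<And>i. eps i \<in> borel_measurable M"
    and eps_indep: "prob_space.indep_vars M (\<lambda>_. borel) eps UNIV"
    and eps_mean: "\<And>i. prob_space.expectation M (eps i) = 0"
    and eps_var: "\<And>i. prob_space.expectation M (\<lambda>\<omega>. (eps i \<omega>)\<^sup>2) = sigma0sq"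
    and sigma0_pos: "sigma0sq > 0"
    and eps_4int: "\<And>i. integrable M (\<lambda>\<omega>. (eps i \<omega>) ^ 4)"
    and eps_4bd: "\<And>i. prob_space.expectation M (\<lambda>\<omega>. (eps i \<omega>) ^ 4) \<le> Mbd"
    and pr_prob: "prob_space pr" and pr_sets: "sets pr = sets borel"
    and mu_prob: "prob_space mu" and mu_sets: "sets mu = sets borel"
    and eta0_pos: "eta0 > 0"
    and pr_supp: "AE g in pr. \<forall>k. g $ k \<ge> eta0"
    and s0_pos: "s0sq > 0"
    and mu_pos: "AE s in mu. s > 0"
    and mu_supp: "AE s in mu. s \<le> s0sq"
    and C_pos: "\<And>n. C n > 0"
    and C_inc: "incseq C"
    and C_inf: "filterlim C at_top sequentially"
    and C_slow: "(\<lambda>n. C n / sqrt (real n)) \<longlonglongrightarrow> 0"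
  shows "(\<forall>n>CARD('k). {\<omega> \<in> space M.
             model_hat (post_mean pr mu (real n) (x n) n
                (rescaled (x n) n (\<lambda>i. x n i \<bullet> beta0 + eps i \<omega>))) (C n)
             \<noteq> model_true beta0} \<in> sets M)
       \<and> (\<lambda>n. measure M {\<omega> \<in> space M.
             model_hat (post_mean pr mu (real n) (x n) n
                (rescaled (x n) n (\<lambda>i. x n i \<bullet> beta0 + eps i \<omega>))) (C n)
             \<noteq> model_true beta0}) \<longlonglongrightarrow> 0"
proof -
  interpret P: prob_space M by (rule P)
  define K where "K = CARD('k)"
  define v where "v = sigma0sq"
  define c0 where "c0 = eta0 / (eta0 + s0sq)"
  define dl where "dl = (\<lambda>k. min (v / (4 * real K)) (if beta0 $ k = 0 then 1 else (beta0 $ k)\<^sup>2 / 4))"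
  define gam where "gam = (\<lambda>k. c0 * \<bar>beta0 $ k\<bar> / (2 * sqrt (3 * v)))"
  define Err where "Err = (\<lambda>n. {\<omega> \<in> space M.
             model_hat (post_mean pr mu (real n) (x n) n
                (rescaled (x n) n (\<lambda>i. x n i \<bullet> beta0 + eps i \<omega>))) (C n)
             \<noteq> model_true beta0})"
  have v: "v > 0" unfolding v_def by (rule sigma0_pos)
  have K0: "real K > 0" unfolding K_def by simp
  have dl_pos: "dl k > 0" for k unfolding dl_def using v K0 by auto
  have c0: "c0 > 0" unfolding c0_def using eta0_pos s0_pos by simp
  note [measurable] = eps_rv
  have Err_meas: "Err n \<in> sets M" if nK: "n > CARD('k)" for n
  proof -
    have hg: "gram (x n) n = real n *\<^sub>R mat 1" by (rule design_orth[OF nK])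
    have n: "n > 0" using nK by simp
    have rm: "(\<lambda>\<omega>. rescaled (x n) n (\<lambda>i. x n i \<bullet> beta0 + eps i \<omega>) i) \<in> borel_measurable M" for i
      unfolding rescaled_def sigma_hat_Rz[OF hg n] Rz_expl by measurable
    have pm[measurable]: "(\<lambda>\<omega>. post_mean pr mu (real n) (x n) n (rescaled (x n) n (\<lambda>i. x n i \<bullet> beta0 + eps i \<omega>)) $ k) \<in> borel_measurable M" for k
      by (rule post_mean_meas[OF rm pr_sets mu_sets pr_prob mu_prob])
    have "Err n = {\<omega> \<in> space M. \<exists>k. \<not> ((C n \<le> \<bar>post_mean pr mu (real n) (x n) n (rescaled (x n) n (\<lambda>i. x n i \<bullet> beta0 + eps i \<omega>)) $ k\<bar>) = (beta0 $ k \<noteq> 0))}"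
      unfolding Err_def model_hat_def model_true_def fun_eq_iff by simp
    also have "\<dots> \<in> sets M" by measurable
    finally show ?thesis .
  qed
  define bnd where "bnd = (\<lambda>n. 4 * Mbd / v\<^sup>2 / real n + (\<Sum>k\<in>UNIV. 4 / (C n)\<^sup>2 + v / dl k / real n))"
  have bnd_lim: "bnd \<longlonglongrightarrow> 0"
  proof -
    have Cinf: "filterlim (\<lambda>n. (C n)\<^sup>2) at_infinity sequentially"
      by (rule filterlim_at_top_imp_at_infinity, rule filterlim_pow_at_top[OF _ C_inf]) simp
    have "(\<lambda>n. 4 / (C n)\<^sup>2) \<longlonglongrightarrow> 0" by (rule tendsto_divide_0[OF tendsto_const Cinf])
    then have "(\<lambda>n. \<Sum>k\<in>(UNIV::'k set). 4 / (C n)\<^sup>2 + v / dl k / real n) \<longlonglongrightarrow> (\<Sum>k\<in>(UNIV::'k set). 0 + 0)"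
      by (intro tendsto_sum tendsto_add lim_const_over_n)
    then have "bnd \<longlonglongrightarrow> 0 + (\<Sum>k\<in>(UNIV::'k set). 0 + 0)"
      unfolding bnd_def by (intro tendsto_add lim_const_over_n)
    then show ?thesis by simp
  qed
  have ev: "eventually (\<lambda>n. n > CARD('k) \<and> real n \<ge> 2 * real CARD('k) \<and>
      (\<forall>k. beta0 $ k \<noteq> 0 \<longrightarrow> C n / sqrt (real n) < gam k)) sequentially"
  proof -
    have e1: "eventually (\<lambda>n. n \<ge> 2 * CARD('k) + 1) sequentially" by (rule eventually_ge_at_top)
    have e2: "eventually (\<lambda>n. \<forall>k. beta0 $ k \<noteq> 0 \<longrightarrow> C n / sqrt (real n) < gam k) sequentially"
    proof (rule eventually_all_finite)
      fix k
      show "eventually (\<lambda>n. beta0 $ k \<noteq> 0 \<longrightarrow> C n / sqrt (real n) < gam k) sequentially"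
      proof (cases "beta0 $ k = 0")
        case False
        then have "gam k > 0" unfolding gam_def using c0 v by simp
        from order_tendstoD(2)[OF C_slow this] show ?thesis by (rule eventually_mono) simp
      qed simp
    qed
    from e1 e2 show ?thesis by eventually_elim auto
  qed
  have bound: "eventually (\<lambda>n. measure M (Err n) \<le> bnd n) sequentially"
    using ev
  proof eventually_elim
    case (elim n)
    then have nK: "n > CARD('k)" and n2K: "real n \<ge> 2 * real CARD('k)"
      and hCn: "\<And>k. beta0 $ k \<noteq> 0 \<Longrightarrow> C n / sqrt (real n) < gam k" by auto
    have hg: "gram (x n) n = real n *\<^sub>R mat 1" by (rule design_orth[OF nK])
    have n: "n > 0" using nK by simp
    have rn: "real n > 0" using n by simp
    define BS where "BS = {\<omega> \<in> space M. \<bar>(\<Sum>i<n. (eps i \<omega>)\<^sup>2) - real n * v\<bar> \<ge> real n * v / 2}"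
    define B1 where "B1 = (\<lambda>k. {\<omega> \<in> space M. (\<Sum>i<n. x n i $ k * eps i \<omega>)\<^sup>2 / real n \<ge> v * (C n)\<^sup>2 / 4})"
    define B2 where "B2 = (\<lambda>k. {\<omega> \<in> space M. (\<Sum>i<n. x n i $ k * eps i \<omega>)\<^sup>2 / real n \<ge> real n * dl k})"
    have BSm: "BS \<in> sets M" unfolding BS_def by measurable
    have B1m: "B1 k \<in> sets M" for k unfolding B1_def by measurable
    have B2m: "B2 k \<in> sets M" for k unfolding B2_def by measurable
    have sub: "Err n \<subseteq> BS \<union> (\<Union>k. B1 k \<union> B2 k)"
    proof
      fix \<omega> assume w: "\<omega> \<in> Err n"
      then have ws: "\<omega> \<in> space M" unfolding Err_def by simp
      show "\<omega> \<in> BS \<union> (\<Union>k. B1 k \<union> B2 k)"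
      proof (rule ccontr)
        assume "\<omega> \<notin> BS \<union> (\<Union>k. B1 k \<union> B2 k)"
        then have hS: "\<bar>(\<Sum>i<n. (eps i \<omega>)\<^sup>2) - real n * v\<bar> < real n * v / 2"
          and hT1: "\<And>k. (\<Sum>i<n. x n i $ k * eps i \<omega>)\<^sup>2 / real n < v * (C n)\<^sup>2 / 4"
          and hT2: "\<And>k. (\<Sum>i<n. x n i $ k * eps i \<omega>)\<^sup>2 / real n < real n * dl k"
          using ws unfolding BS_def B1_def B2_def by (auto simp: not_le)
        have dl1: "dl k \<le> v / (4 * real CARD('k))" for k unfolding dl_def K_def by simp
        have dl2: "dl k \<le> (beta0 $ k)\<^sup>2 / 4" if "beta0 $ k \<noteq> 0" for k unfolding dl_def using that by simp
        have hC: "C n / sqrt (real n) < eta0 / (eta0 + s0sq) * \<bar>beta0 $ k\<bar> / (2 * sqrt (3 * v))"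
          if "beta0 $ k \<noteq> 0" for k using hCn[OF that] unfolding gam_def c0_def .
        have "model_hat (post_mean pr mu (real n) (x n) n (rescaled (x n) n (\<lambda>i. x n i \<bullet> beta0 + eps i \<omega>))) (C n) = model_true beta0"
          by (rule det_core[OF hg nK n2K pr_prob pr_sets mu_prob mu_sets eta0_pos pr_supp s0_pos mu_pos mu_supp
                v C_pos hS hT1 hT2 dl1 dl2 hC])
        with w show False unfolding Err_def by simp
      qed
    qed
    have "measure M (Err n) \<le> measure M (BS \<union> (\<Union>k. B1 k \<union> B2 k))"
      by (rule P.finite_measure_mono[OF sub]) (use BSm B1m B2m in auto)
    also have "\<dots> \<le> measure M BS + measure M (\<Union>k. B1 k \<union> B2 k)"
      by (rule measure_Un_le) (use BSm B1m B2m in auto)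
    also have "measure M (\<Union>k. B1 k \<union> B2 k) \<le> (\<Sum>k\<in>UNIV. measure M (B1 k \<union> B2 k))"
      by (rule measure_UNION_le) (use B1m B2m in auto)
    also have "\<dots> \<le> (\<Sum>k\<in>UNIV. measure M (B1 k) + measure M (B2 k))"
      by (intro sum_mono measure_Un_le B1m B2m)
    also have "measure M BS \<le> 4 * Mbd / v\<^sup>2 / real n"
    proof -
      have "measure M BS \<le> real n * Mbd / (real n * v / 2)\<^sup>2"
        unfolding BS_def v_def
        by (rule P.cheb_S[OF eps_indep eps_rv eps_4int eps_4bd eps_var n]) (use rn sigma0_pos in simp)
      also have "\<dots> = 4 * Mbd / v\<^sup>2 / real n" using rn v by (simp add: field_simps power2_eq_square)
      finally show ?thesis .
    qed
    also have "(\<Sum>k\<in>UNIV. measure M (B1 k) + measure M (B2 k)) \<le> (\<Sum>k\<in>UNIV. 4 / (C n)\<^sup>2 + v / dl k / real n)"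
    proof (rule sum_mono)
      fix k
      have sa: "(\<Sum>i<n. (x n i $ k)\<^sup>2) = real n"
        using gram_entry[OF hg, of k k] by (simp add: power2_eq_square)
      have Cp: "C n > 0" by (rule C_pos)
      have "measure M (B1 k) \<le> v / (v * (C n)\<^sup>2 / 4)"
        unfolding B1_def v_def
        by (rule P.markov_T[OF eps_indep eps_rv eps_4int eps_mean eps_var sa n]) (use Cp sigma0_pos in simp)
      also have "\<dots> = 4 / (C n)\<^sup>2" using v Cp by (simp add: field_simps)
      finally have a1: "measure M (B1 k) \<le> 4 / (C n)\<^sup>2" .
      have "measure M (B2 k) \<le> v / (real n * dl k)"
        unfolding B2_def v_def
        by (rule P.markov_T[OF eps_indep eps_rv eps_4int eps_mean eps_var sa n]) (use rn dl_pos in simp)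
      also have "\<dots> = v / dl k / real n" by (simp add: field_simps)
      finally have a2: "measure M (B2 k) \<le> v / dl k / real n" .
      show "measure M (B1 k) + measure M (B2 k) \<le> 4 / (C n)\<^sup>2 + v / dl k / real n" using a1 a2 by simp
    qed
    finally show ?case unfolding bnd_def by simp
  qed
  have lim: "(\<lambda>n. measure M (Err n)) \<longlonglongrightarrow> 0"
    by (rule tendsto_sandwich[OF _ bound tendsto_const bnd_lim]) simp
  show ?thesis
    using Err_meas lim unfolding Err_def by auto
qed


end
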